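(* In the setting below, consider a purely asymmetric configuration with $\lambda_{DA}$ the lexicographically strictly largest word. After one move by a robot according to Algorithm 2, $\lambda_{DA}$ remains strictly larger than each of $\lambda_{CD},\lambda_{AD},\lambda_{CB},\lambda_{AB},\lambda_{BA},\lambda_{BC}$.
   Context: Setting: $G$ is the $n\times n$ grid, $n$ even, configuration $f:V(G)\to\{0,1,2\}$ ($0$ empty, $1$ singleton, $2$ multiplicity = at least two robots; robots have only weak multiplicity detection), no corner occupied, at least one robot on the boundary. Corners $A,B,C,D$ with sides $DA,AB,BC,CD$. For adjacent corners $(X,Y)$, $\lambda_{XY}\in\{0,1,2\}^{n^2}$ reads $f$ along side $XY$ from $X$ to $Y$, then along successive parallel grid lines in order of increasing distance from $XY$, each in the same direction. Words compared lexicographically. Coordinates: when $\lambda_{DA}$ is strictly largest, node $(i,j)$ ($1\le i,j\le n$) is at distance $i-1$ from side $DC$ and $j-1$ from side $DA$; thus $D=(1,1)$, $A=(n,1)$, $C=(1,n)$, $B=(n,n)$, and $(i,j)$ is entry $n(j-1)+i$ of $\lambda_{DA}$. Asymmetric: $\lambda_{DA}$ strictly exceeds the other seven words. Second largest corner: whichever of $A,C$ starts the largest of $\lambda_{AB},\lambda_{AD},\lambda_{CB},\lambda_{CD}$. Almost symmetric of the first type: asymmetric, no multiplicities, a robot on $DC$, and $\lambda_{DA},\lambda_{DC}$ coincide after replacing each one's first nonzero entry by $0$. Almost symmetric of the second type: asymmetric, no multiplicities, and for the second largest corner $X$ with adjacent corners $Y,Z$, $\lambda_{XY},\lambda_{XZ}$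 coincide after replacing each one's first nonzero entry by $0$. Purely asymmetric: asymmetric and neither almost symmetric type. Leading duo of a purely asymmetric configuration: if the first nonzero entry of $\lambda_{DA}$ is $1$, the robots at the first two nonzero entries of $\lambda_{DA}$ (the first robot and the second robot); if it is $2$, the robots of that multiplicity. Algorithm 2: in a purely asymmetric configuration, each robot of the leading duo, located at $(i,j)$, moves to $(i-1,j)$ (along its column toward $D$) if $j=1$, or $j=2$ and $i>2$, or $i=n$ and $j\le n/2$; otherwise it moves to $(i,j-1)$ (along its row toward $D$). Other robots stay. *)

theory Defs
  imports Main
begin

text \<open>Nodes of the n x n grid are pairs (i,j) with 1 <= i,j <= n, in the coordinates of
the paper: D=(1,1), A=(n,1), C=(1,n), B=(n,n); side DA is j=1, side DC is i=1.
A configuration is f :: nat => nat => nat with values in {0,1,2}.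
The underlying robot placement is given by robot counts c :: nat => nat => nat;
the observed configuration (weak multiplicity detection) is  cap c.\<close>

definition cap :: "(nat \<Rightarrow> nat \<Rightarrow> nat) \<Rightarrow> nat \<Rightarrow> nat \<Rightarrow> nat" where
  "cap c = (\<lambda>i j. min 2 (c i j))"

text \<open>Generic reading: line k (k = 1..n, at distance k-1 from the starting side),
position l (l = 1..n) along the line.\<close>
definition word :: "nat \<Rightarrow> (nat \<Rightarrow> nat \<Rightarrow> 'a) \<Rightarrow> 'a list" where
  "word n g = concat (map (\<lambda>k. map (\<lambda>l. g k l) [1..<n+1]) [1..<n+1])"

definition lam_DA :: "nat \<Rightarrow> (nat \<Rightarrow> nat \<Rightarrow> nat) \<Rightarrow> nat list" where
  "lam_DA n f = word n (\<lambda>k l. f l k)"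
definition lam_DC :: "nat \<Rightarrow> (nat \<Rightarrow> nat \<Rightarrow> nat) \<Rightarrow> nat list" where
  "lam_DC n f = word n (\<lambda>k l. f k l)"
definition lam_AD :: "nat \<Rightarrow> (nat \<Rightarrow> nat \<Rightarrow> nat) \<Rightarrow> nat list" where
  "lam_AD n f = word n (\<lambda>k l. f (n + 1 - l) k)"
definition lam_AB :: "nat \<Rightarrow> (nat \<Rightarrow> nat \<Rightarrow> nat) \<Rightarrow> nat list" where
  "lam_AB n f = word n (\<lambda>k l. f (n + 1 - k) l)"
definition lam_BA :: "nat \<Rightarrow> (nat \<Rightarrow> nat \<Rightarrow> nat) \<Rightarrow> nat list" where
  "lam_BA n f = word n (\<lambda>k l. f (n + 1 - k) (n + 1 - l))"
definition lam_BC :: "nat \<Rightarrow> (nat \<Rightarrow> nat \<Rightarrow> nat) \<Rightarrow> nat list" where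
  "lam_BC n f = word n (\<lambda>k l. f (n + 1 - l) (n + 1 - k))"
definition lam_CB :: "nat \<Rightarrow> (nat \<Rightarrow> nat \<Rightarrow> nat) \<Rightarrow> nat list" where
  "lam_CB n f = word n (\<lambda>k l. f l (n + 1 - k))"
definition lam_CD :: "nat \<Rightarrow> (nat \<Rightarrow> nat \<Rightarrow> nat) \<Rightarrow> nat list" where
  "lam_CD n f = word n (\<lambda>k l. f k (n + 1 - l))"

definition lex_less :: "nat list \<Rightarrow> nat list \<Rightarrow> bool" where
  "lex_less u v \<longleftrightarrow> (u, v) \<in> lexord {(a, b). a < b}"

definition lex_le :: "nat list \<Rightarrow> nat list \<Rightarrow> bool" where
  "lex_le u v \<longleftrightarrow> u = v \<or> lex_less u v"

definition valid_config :: "nat \<Rightarrow> (nat \<Rightarrow> nat \<Rightarrow> nat) \<Rightarrow> bool" where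
  "valid_config n f \<longleftrightarrow> even n \<and> (\<forall>i j. f i j \<le> 2)
     \<and> f 1 1 = 0 \<and> f n 1 = 0 \<and> f 1 n = 0 \<and> f n n = 0
     \<and> (\<exists>i\<in>{1..n}. \<exists>j\<in>{1..n}. (i = 1 \<or> i = n \<or> j = 1 \<or> j = n) \<and> f i j \<noteq> 0)"

definition asymmetric :: "nat \<Rightarrow> (nat \<Rightarrow> nat \<Rightarrow> nat) \<Rightarrow> bool" where
  "asymmetric n f \<longleftrightarrow>
     lex_less (lam_DC n f) (lam_DA n f) \<and> lex_less (lam_AD n f) (lam_DA n f) \<and>
     lex_less (lam_AB n f) (lam_DA n f) \<and> lex_less (lam_BA n f) (lam_DA n f) \<and>
     lex_less (lam_BC n f) (lam_DA n f) \<and> lex_less (lam_CB n f) (lam_DA n f) \<and>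
     lex_less (lam_CD n f) (lam_DA n f)"

definition no_mult :: "nat \<Rightarrow> (nat \<Rightarrow> nat \<Rightarrow> nat) \<Rightarrow> bool" where
  "no_mult n f \<longleftrightarrow> (\<forall>i\<in>{1..n}. \<forall>j\<in>{1..n}. f i j \<noteq> 2)"

fun zero_first :: "nat list \<Rightarrow> nat list" where
  "zero_first [] = []"
| "zero_first (x # xs) = (if x = 0 then 0 # zero_first xs else 0 # xs)"

definition almost_sym1 :: "nat \<Rightarrow> (nat \<Rightarrow> nat \<Rightarrow> nat) \<Rightarrow> bool" where
  "almost_sym1 n f \<longleftrightarrow> asymmetric n f \<and> no_mult n f
     \<and> (\<exists>j\<in>{1..n}. f 1 j \<noteq> 0)
     \<and> zero_first (lam_DA n f) = zero_first (lam_DC n f)"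

definition second_is_A :: "nat \<Rightarrow> (nat \<Rightarrow> nat \<Rightarrow> nat) \<Rightarrow> bool" where
  "second_is_A n f \<longleftrightarrow> (\<exists>w\<in>{lam_AB n f, lam_AD n f}.
      \<forall>v\<in>{lam_AB n f, lam_AD n f, lam_CB n f, lam_CD n f}. lex_le v w)"

definition second_is_C :: "nat \<Rightarrow> (nat \<Rightarrow> nat \<Rightarrow> nat) \<Rightarrow> bool" where
  "second_is_C n f \<longleftrightarrow> (\<exists>w\<in>{lam_CB n f, lam_CD n f}.
      \<forall>v\<in>{lam_AB n f, lam_AD n f, lam_CB n f, lam_CD n f}. lex_le v w)"

definition almost_sym2 :: "nat \<Rightarrow> (nat \<Rightarrow> nat \<Rightarrow> nat) \<Rightarrow> bool" where
  "almost_sym2 n f \<longleftrightarrow> asymmetric n f \<and> no_mult n f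
     \<and> ((second_is_A n f \<and> zero_first (lam_AB n f) = zero_first (lam_AD n f))
      \<or> (second_is_C n f \<and> zero_first (lam_CB n f) = zero_first (lam_CD n f)))"

definition purely_asymmetric :: "nat \<Rightarrow> (nat \<Rightarrow> nat \<Rightarrow> nat) \<Rightarrow> bool" where
  "purely_asymmetric n f \<longleftrightarrow> asymmetric n f \<and> \<not> almost_sym1 n f \<and> \<not> almost_sym2 n f"

text \<open>Grid nodes in the reading order of lam_DA (node (i,j) is entry n(j-1)+i).\<close>
definition nodes_DA :: "nat \<Rightarrow> (nat \<times> nat) list" where
  "nodes_DA n = word n (\<lambda>k l. (l, k))"

definition occupied_DA :: "nat \<Rightarrow> (nat \<Rightarrow> nat \<Rightarrow> nat) \<Rightarrow> (nat \<times> nat) list" where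
  "occupied_DA n f = filter (\<lambda>(i, j). f i j \<noteq> 0) (nodes_DA n)"

text \<open>Nodes holding the leading duo: the first two occupied nodes (if the first nonzero
entry of lam_DA is 1), or the first occupied node (the multiplicity, if it is 2).\<close>
definition leading_duo :: "nat \<Rightarrow> (nat \<Rightarrow> nat \<Rightarrow> nat) \<Rightarrow> (nat \<times> nat) set" where
  "leading_duo n f = (let occ = occupied_DA n f in
     if f (fst (hd occ)) (snd (hd occ)) = 1 then set (take 2 occ) else set (take 1 occ))"

definition alg2_target :: "nat \<Rightarrow> nat \<times> nat \<Rightarrow> nat \<times> nat" where
  "alg2_target n p = (case p of (i, j) \<Rightarrow>
     if j = 1 \<or> (j = 2 \<and> i > 2) \<or> (i = n \<and> j \<le> n div 2) then (i - 1, j) else (i, j - 1))"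

definition move :: "(nat \<Rightarrow> nat \<Rightarrow> nat) \<Rightarrow> nat \<times> nat \<Rightarrow> nat \<times> nat \<Rightarrow> nat \<Rightarrow> nat \<Rightarrow> nat" where
  "move c p q = (\<lambda>i j. c i j - (if (i, j) = p then 1 else 0) + (if (i, j) = q then 1 else 0))"

end

theory Submission
  imports Defs
begin

definition kless :: "nat \<times> nat \<Rightarrow> nat \<times> nat \<Rightarrow> bool" where
  "kless x y \<longleftrightarrow> fst x < fst y \<or> (fst x = fst y \<and> snd x < snd y)"

definition ingrid :: "nat \<Rightarrow> nat \<times> nat \<Rightarrow> bool" where
  "ingrid n x \<longleftrightarrow> 1 \<le> fst x \<and> fst x \<le> n \<and> 1 \<le> snd x \<and> snd x \<le> n"

lemma concat_nth_aux:
  assumes "k < m" "l < (n::nat)"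
  shows "concat (map (\<lambda>k. map (h k) [0..<n]) [0..<m]) ! (n*k + l) = h k l"
  using assms
proof (induction m)
  case 0 then show ?case by simp
next
  case (Suc m)
  have len: "length (concat (map (\<lambda>k. map (h k) [0..<n]) [0..<m])) = n*m"
    by (induction m) simp_all
  show ?case
  proof (cases "k < m")
    case True
    have "n*k + l < n*k + n" using Suc.prems by simp
    also have "\<dots> = n * Suc k" by simp
    also have "\<dots> \<le> n*m" using True by (intro mult_le_mono2) simp
    finally have "n*k + l < n*m" .
    then show ?thesis using Suc True len by (simp add: nth_append)
  next
    case False
    then have "k = m" using Suc.prems by simp
    then show ?thesis using len Suc.prems by (simp add: nth_append)
  qed
qed

lemma word_alt: "word n g = concat (map (\<lambda>k. map (\<lambda>l. g (Suc k) (Suc l)) [0..<n]) [0..<n])"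
proof -
  have "[1..<n+1] = map Suc [0..<n]" by (simp add: map_Suc_upt)
  then show ?thesis unfolding word_def by (simp add: map_map comp_def)
qed

lemma len_aux: "length (concat (map (\<lambda>k. map (h k) [0..<n]) [0..<m])) = n*m"
  by (induction m) simp_all

lemma word_length[simp]: "length (word n g) = n*n"
  unfolding word_alt by (rule len_aux)

lemma word_nth: "x < n*n \<Longrightarrow> word n g ! x = g (x div n + 1) (x mod n + 1)"
proof -
  assume x: "x < n*n"
  then have n0: "n > 0" by (cases n) auto
  have "x div n < n" using x n0 by (simp add: div_less_iff_less_mult)
  moreover have "x mod n < n" using n0 by simp
  moreover have "x = n*(x div n) + x mod n" by simp
  ultimately show ?thesis unfolding word_alt
    using concat_nth_aux[of "x div n" n "x mod n" n "\<lambda>k l. g (Suc k) (Suc l)"] by simp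
qed

lemma idx_less_iff:
  assumes "(n::nat) > 0"
  shows "a < b \<longleftrightarrow> kless (a div n + 1, a mod n + 1) (b div n + 1, b mod n + 1)"
proof -
  have a: "a = n*(a div n) + a mod n" and b: "b = n*(b div n) + b mod n" by simp_all
  have am: "a mod n < n" and bm: "b mod n < n" using assms by simp_all
  show ?thesis
  proof
    assume "a < b"
    then have "a div n \<le> b div n" by (simp add: div_le_mono)
    moreover have "a mod n < b mod n" if "a div n = b div n"
    proof -
      have "n*(a div n) = n*(b div n)" using that by simp
      then show ?thesis using a b \<open>a<b\<close> by linarith
    qed
    ultimately show "kless (a div n + 1, a mod n + 1) (b div n + 1, b mod n + 1)"
      unfolding kless_def by auto
  next
    assume "kless (a div n + 1, a mod n + 1) (b div n + 1, b mod n + 1)"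
    then consider "a div n < b div n" | "a div n = b div n" "a mod n < b mod n"
      unfolding kless_def by auto
    then show "a < b"
    proof cases
      case 1
      then have "n * (a div n) + n \<le> n * (b div n)"
        by (metis Suc_le_eq mult_Suc_right mult_le_mono2 add.commute plus_1_eq_Suc)
      then show ?thesis using a b am by linarith
    next
      case 2
      then have "n*(a div n) = n*(b div n)" by simp
      then show ?thesis using a b 2 by linarith
    qed
  qed
qed

definition kidx :: "nat \<Rightarrow> nat \<times> nat \<Rightarrow> nat" where
  "kidx n K = n*(fst K - 1) + (snd K - 1)"

lemma key_idx:
  assumes "ingrid n K"
  shows "kidx n K < n*n" "kidx n K div n + 1 = fst K" "kidx n K mod n + 1 = snd K"
proof -
  obtain k l where K: "K = (Suc k, Suc l)" "k < n" "l < n" using assms unfolding ingrid_def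
    by (cases K) (auto simp: Suc_le_eq gr0_conv_Suc)
  have "n*k + l < n*k + n" using K by simp
  also have "\<dots> = n * Suc k" by simp
  also have "\<dots> \<le> n*n" using K by (intro mult_le_mono2) simp
  finally show "kidx n K < n*n" using K by (simp add: kidx_def)
  show "kidx n K div n + 1 = fst K" "kidx n K mod n + 1 = snd K" using K by (simp_all add: kidx_def)
qed

lemma word_nth_key: "ingrid n K \<Longrightarrow> word n g ! kidx n K = g (fst K) (snd K)"
proof -
  assume K: "ingrid n K"
  have "word n g ! kidx n K = g (kidx n K div n + 1) (kidx n K mod n + 1)"
    by (rule word_nth[OF key_idx(1)[OF K]])
  also have "\<dots> = g (fst K) (snd K)" using key_idx(2,3)[OF K] by simp
  finally show ?thesis .
qed

lemma W1:
  assumes "lex_less (word n g) (word n h)"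
  shows "\<exists>D. ingrid n D \<and> (\<forall>K. ingrid n K \<longrightarrow> kless K D \<longrightarrow> g (fst K) (snd K) = h (fst K) (snd K))
           \<and> g (fst D) (snd D) < h (fst D) (snd D)"
proof -
  from assms obtain i where i: "i < n*n" "take i (word n g) = take i (word n h)"
    "word n g ! i < word n h ! i"
    unfolding lex_less_def lexord_take_index_conv by auto
  have n0: "n > 0" using i by (cases n) auto
  let ?D = "(i div n + 1, i mod n + 1)"
  have "ingrid n ?D" using i n0 by (auto simp: ingrid_def div_less_iff_less_mult Suc_le_eq)
  moreover have "g (fst K) (snd K) = h (fst K) (snd K)" if K: "ingrid n K" "kless K ?D" for K
  proof -
    let ?x = "kidx n K"
    have kx: "?x < n*n" "?x div n + 1 = fst K" "?x mod n + 1 = snd K" using key_idx[OF K(1)] by auto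
    have "?x < i" using idx_less_iff[OF n0, of ?x i] K(2) kx by simp
    then have "word n g ! ?x = word n h ! ?x" using i(2)
      by (metis nth_take)
    then show ?thesis using word_nth_key[OF K(1), of g] word_nth_key[OF K(1), of h] by simp
  qed
  moreover have "g (fst ?D) (snd ?D) < h (fst ?D) (snd ?D)" using i word_nth[OF i(1), of g] word_nth[OF i(1), of h] by simp
  ultimately show ?thesis by blast
qed

lemma W2:
  assumes "ingrid n D" "\<forall>K. ingrid n K \<longrightarrow> kless K D \<longrightarrow> g (fst K) (snd K) \<le> h (fst K) (snd K)"
    "g (fst D) (snd D) < h (fst D) (snd D)"
  shows "lex_less (word n g) (word n h)"
proof -
  let ?i = "kidx n D"
  have di: "?i < n*n" "?i div n + 1 = fst D" "?i mod n + 1 = snd D" using key_idx[OF assms(1)] by auto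
  have n0: "n > 0" using di by (cases n) auto
  have le: "word n g ! x \<le> word n h ! x" if "x < ?i" for x
  proof -
    have x: "x < n*n" using that di by linarith
    have "ingrid n (x div n + 1, x mod n + 1)" using x n0
      by (auto simp: ingrid_def div_less_iff_less_mult Suc_le_eq)
    moreover have "kless (x div n + 1, x mod n + 1) D"
      using idx_less_iff[OF n0, of x ?i] that di by simp
    ultimately have "g (x div n + 1) (x mod n + 1) \<le> h (x div n + 1) (x mod n + 1)"
      using assms(2) by (metis fst_conv snd_conv)
    then show ?thesis using word_nth[OF x, of g] word_nth[OF x, of h] by simp
  qed
  have ex: "word n g ! ?i \<noteq> word n h ! ?i" using assms(3) word_nth_key[OF assms(1), of g] word_nth_key[OF assms(1), of h] by simp
  define j where "j = (LEAST j. word n g ! j \<noteq> word n h ! j)"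
  have j1: "word n g ! j \<noteq> word n h ! j" unfolding j_def by (rule LeastI, rule ex)
  have j2: "j \<le> ?i" unfolding j_def by (rule Least_le, rule ex)
  have j3: "word n g ! x = word n h ! x" if "x < j" for x
    using that not_less_Least unfolding j_def by blast
  have "take j (word n g) = take j (word n h)"
    using j2 di j3 by (intro nth_equalityI) auto
  moreover have "word n g ! j < word n h ! j"
  proof (cases "j < ?i")
    case True then show ?thesis using le[OF True] j1 by simp
  next
    case False then have "j = ?i" using j2 by simp
    then show ?thesis using assms(3) word_nth_key[OF assms(1), of g] word_nth_key[OF assms(1), of h] by simp
  qed
  moreover have "j < n*n" using j2 di by linarith
  ultimately show ?thesis unfolding lex_less_def lexord_take_index_conv by auto
qed

definition wk :: "nat \<Rightarrow> (nat \<times> nat \<Rightarrow> nat) \<Rightarrow> nat list" where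
  "wk n u = word n (\<lambda>k l. u (k, l))"

definition sw :: "nat \<times> nat \<Rightarrow> nat \<times> nat" where
  "sw x = (snd x, fst x)"

lemma kless_trans: "kless a b \<Longrightarrow> kless b c \<Longrightarrow> kless a c"
  unfolding kless_def by auto
lemma kless_irrefl: "\<not> kless a a"
  unfolding kless_def by auto
lemma kless_asym: "kless a b \<Longrightarrow> \<not> kless b a"
  unfolding kless_def by auto
lemma kless_total: "a = b \<or> kless a b \<or> kless b a"
  unfolding kless_def by (cases a, cases b) auto

lemma W1k:
  assumes "lex_less (wk n u) (wk n v)"
  shows "\<exists>D. ingrid n D \<and> (\<forall>K. ingrid n K \<longrightarrow> kless K D \<longrightarrow> u K = v K) \<and> u D < v D"
  using W1[OF assms[unfolded wk_def]] by simp

lemma W2k: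
  assumes "ingrid n D" "\<forall>K. ingrid n K \<longrightarrow> kless K D \<longrightarrow> u K \<le> v K" "u D < v D"
  shows "lex_less (wk n u) (wk n v)"
  unfolding wk_def by (rule W2[OF assms(1)]) (use assms in simp_all)

lemma pre_zero:
  assumes "lex_less (wk n u) (wk n v)" "ingrid n E"
    "\<forall>K. ingrid n K \<longrightarrow> kless K E \<longrightarrow> v K = 0"
  shows "(\<forall>K. ingrid n K \<longrightarrow> kless K E \<longrightarrow> u K = 0) \<and> u E \<le> v E"
proof -
  obtain D where D: "ingrid n D" "\<forall>K. ingrid n K \<longrightarrow> kless K D \<longrightarrow> u K = v K" "u D < v D"
    using W1k[OF assms(1)] by blast
  have "\<not> kless D E"
  proof
    assume "kless D E" then have "v D = 0" using assms(3) D(1) by blast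
    then show False using D(3) by simp
  qed
  then have "D = E \<or> kless E D" using kless_total by blast
  then show ?thesis using D assms(2,3) kless_trans by (metis order.order_iff_strict)
qed

lemma tie_zero:
  assumes "lex_less (wk n u) (wk n v)" "ingrid n E"
    "\<forall>K. ingrid n K \<longrightarrow> kless K E \<longrightarrow> v K = 0" "v E \<le> u E"
    "\<forall>K. ingrid n K \<longrightarrow> kless E K \<longrightarrow> kless K P \<longrightarrow> v K = 0"
  shows "\<forall>K. ingrid n K \<longrightarrow> kless E K \<longrightarrow> kless K P \<longrightarrow> u K = 0"
proof -
  obtain D where D: "ingrid n D" "\<forall>K. ingrid n K \<longrightarrow> kless K D \<longrightarrow> u K = v K" "u D < v D"
    using W1k[OF assms(1)] by blast
  have "\<not> kless D E"
  proof
    assume "kless D E" then have "v D = 0" using assms(3) D(1) by blast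
    then show False using D(3) by simp
  qed
  moreover have "D \<noteq> E" using D assms(4) by auto
  moreover have "\<not> (kless E D \<and> kless D P)"
  proof
    assume "kless E D \<and> kless D P" then have "v D = 0" using assms(5) D(1) by blast
    then show False using D(3) by simp
  qed
  ultimately have "D = P \<or> kless P D" using kless_total by blast
  then show ?thesis using D assms(5) kless_trans by metis
qed

lemma G_gen:
  assumes "lex_less (wk n u) (wk n v)" "ingrid n A"
    "\<forall>K. ingrid n K \<longrightarrow> K \<noteq> B \<longrightarrow> u' K \<le> u K"
    "\<forall>K. ingrid n K \<longrightarrow> kless K A \<longrightarrow> v' K = v K" "v A < v' A"
    "kless A B \<or> (\<exists>D. ingrid n D \<and> kless D B \<and> (\<forall>K. ingrid n K \<longrightarrow> kless K D \<longrightarrow> u K = v K) \<and> u D < v D)"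
  shows "lex_less (wk n u') (wk n v')"
proof -
  obtain d where d: "ingrid n d" "\<forall>K. ingrid n K \<longrightarrow> kless K d \<longrightarrow> u K = v K" "u d < v d"
    "kless A B \<or> kless d B"
    using assms(6) W1k[OF assms(1)] by blast
  show ?thesis
  proof (cases "kless d A")
    case True
    then have dB: "kless d B" using d(4) kless_trans by blast
    show ?thesis
    proof (rule W2k[OF d(1)])
      show "\<forall>K. ingrid n K \<longrightarrow> kless K d \<longrightarrow> u' K \<le> v' K"
      proof (intro allI impI)
        fix K assume K: "ingrid n K" "kless K d"
        have "K \<noteq> B" using K dB kless_trans kless_irrefl by blast
        then have "u' K \<le> u K" using assms(3) K by blast
        also have "\<dots> = v K" using d(2) K by blast
        also have "\<dots> = v' K" using assms(4) K True kless_trans by metis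
        finally show "u' K \<le> v' K" .
      qed
      have "d \<noteq> B" using dB kless_irrefl by blast
      then have "u' d \<le> u d" using assms(3) d(1) by blast
      also have "\<dots> < v d" by (rule d(3))
      also have "\<dots> = v' d" using assms(4) d(1) True by metis
      finally show "u' d < v' d" .
    qed
  next
    case False
    then have Ad: "A = d \<or> kless A d" using kless_total by blast
    then have AB: "kless A B" using d(4) kless_trans by blast
    show ?thesis
    proof (rule W2k[OF assms(2)])
      show "\<forall>K. ingrid n K \<longrightarrow> kless K A \<longrightarrow> u' K \<le> v' K"
      proof (intro allI impI)
        fix K assume K: "ingrid n K" "kless K A"
        have "K \<noteq> B" using K AB kless_trans kless_irrefl by blast
        then have "u' K \<le> u K" using assms(3) K by blast
        also have "\<dots> = v K" using d(2) K Ad kless_trans by metis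
        also have "\<dots> = v' K" using assms(4) K by (metis (no_types))
        finally show "u' K \<le> v' K" .
      qed
      have "A \<noteq> B" using AB kless_irrefl by blast
      then have "u' A \<le> u A" using assms(3,2) by blast
      also have "\<dots> \<le> v A" using Ad d(2,3) assms(2) by fastforce
      also have "\<dots> < v' A" by (rule assms(5))
      finally show "u' A < v' A" .
    qed
  qed
qed

lemma sw_sw[simp]: "sw (sw x) = x" by (simp add: sw_def)
lemma ingrid_sw[simp]: "ingrid n (sw x) = ingrid n x" by (auto simp: sw_def ingrid_def)

lemma G_node:
  fixes r \<kappa> :: "nat \<times> nat \<Rightarrow> nat \<times> nat" and F F' :: "nat \<times> nat \<Rightarrow> nat"
  assumes bij1: "\<forall>K. ingrid n K \<longrightarrow> ingrid n (r K) \<and> \<kappa> (r K) = K"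
    and lt: "lex_less (wk n (F \<circ> r)) (wk n (F \<circ> sw))"
    and mono: "\<forall>x. ingrid n x \<longrightarrow> x \<noteq> q \<longrightarrow> F' x \<le> F x"
    and pre: "\<forall>x. ingrid n x \<longrightarrow> kless (sw x) (sw q) \<longrightarrow> F' x = F x"
    and Fq: "F q < F' q" and q: "ingrid n q"
    and geo: "kless (sw q) (\<kappa> q) \<or> (\<exists>D. ingrid n D \<and> kless D (\<kappa> q) \<and>
        (\<forall>K. ingrid n K \<longrightarrow> kless K D \<longrightarrow> F (r K) = F (sw K)) \<and> F (r D) < F (sw D))"
  shows "lex_less (wk n (F' \<circ> r)) (wk n (F' \<circ> sw))"
proof (rule G_gen[OF lt, of "sw q" "\<kappa> q"])
  show "ingrid n (sw q)" using q by simp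
  show "\<forall>K. ingrid n K \<longrightarrow> K \<noteq> \<kappa> q \<longrightarrow> (F' \<circ> r) K \<le> (F \<circ> r) K"
  proof (intro allI impI)
    fix K assume K: "ingrid n K" "K \<noteq> \<kappa> q"
    then have "r K \<noteq> q" using bij1 by metis
    moreover have "ingrid n (r K)" using bij1 K by blast
    ultimately show "(F' \<circ> r) K \<le> (F \<circ> r) K" using mono by (metis comp_apply)
  qed
  show "\<forall>K. ingrid n K \<longrightarrow> kless K (sw q) \<longrightarrow> (F' \<circ> sw) K = (F \<circ> sw) K"
    using pre by (metis comp_apply ingrid_sw sw_sw)
  show "(F \<circ> sw) (sw q) < (F' \<circ> sw) (sw q)" using Fq by simp
  show "kless (sw q) (\<kappa> q) \<or> (\<exists>D. ingrid n D \<and> kless D (\<kappa> q) \<and>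
        (\<forall>K. ingrid n K \<longrightarrow> kless K D \<longrightarrow> (F \<circ> r) K = (F \<circ> sw) K) \<and> (F \<circ> r) D < (F \<circ> sw) D)"
    using geo by simp
qed

lemma caseB_word:
  fixes r \<kappa> :: "nat \<times> nat \<Rightarrow> nat \<times> nat" and F F' :: "nat \<times> nat \<Rightarrow> nat"
  assumes bij1: "\<forall>K. ingrid n K \<longrightarrow> ingrid n (r K) \<and> \<kappa> (r K) = K"
    and bij2: "\<forall>x. ingrid n x \<longrightarrow> ingrid n (\<kappa> x) \<and> r (\<kappa> x) = x"
    and lt: "lex_less (wk n (F \<circ> r)) (wk n (F \<circ> sw))"
    and mono: "\<forall>x. ingrid n x \<longrightarrow> x \<noteq> q \<longrightarrow> F' x \<le> F x"
    and same: "\<forall>x. ingrid n x \<longrightarrow> x \<noteq> p2 \<longrightarrow> x \<noteq> q \<longrightarrow> F' x = F x"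
    and Fq: "F q < F' q" and q: "ingrid n q"
    and p1: "ingrid n p1" "F p1 = 1"
    and p2: "ingrid n p2" "F p2 \<ge> 1" "p2 \<noteq> p1" "q \<noteq> p2" "F p2 \<le> 1 \<longrightarrow> F' p2 = 0"
    and DAzero: "\<forall>x. ingrid n x \<longrightarrow> kless (sw x) (sw p2) \<longrightarrow> x \<noteq> p1 \<longrightarrow> F x = 0"
    and ord: "kless (sw p1) (sw p2)" "kless (sw q) (sw p2)"
    and geo: "kless (sw q) (\<kappa> q) \<or> (\<not> kless (sw q) (sw p1) \<and> kless (sw p1) (\<kappa> q) \<and>
       (r (sw p1) = p2 \<or> (kless (sw p1) (\<kappa> p1) \<and> kless (\<kappa> p1) (sw p2))
        \<or> (kless (sw p1) (\<kappa> p2) \<and> kless (\<kappa> p2) (sw p2))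
        \<or> (kless (sw (r (sw p1))) (sw p2) \<and> r (sw p1) \<noteq> p1)))"
  shows "lex_less (wk n (F' \<circ> r)) (wk n (F' \<circ> sw))"
proof -
  let ?E = "sw p1"
  have E: "ingrid n ?E" using p1 by simp
  have pre: "\<forall>x. ingrid n x \<longrightarrow> kless (sw x) (sw q) \<longrightarrow> F' x = F x"
  proof (intro allI impI)
    fix x assume x: "ingrid n x" "kless (sw x) (sw q)"
    have "x \<noteq> q" using x kless_irrefl by blast
    moreover have "x \<noteq> p2" using x ord kless_asym kless_trans by blast
    ultimately show "F' x = F x" using same x by blast
  qed
  have vz: "\<forall>K. ingrid n K \<longrightarrow> kless K ?E \<longrightarrow> (F \<circ> sw) K = 0"
  proof (intro allI impI)
    fix K assume K: "ingrid n K" "kless K ?E"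
    have "sw K \<noteq> p1" using K kless_irrefl by (metis sw_sw)
    moreover have "kless (sw (sw K)) (sw p2)" using K ord kless_trans by simp
    ultimately show "(F \<circ> sw) K = 0" using DAzero K by (metis comp_apply ingrid_sw)
  qed
  have vz2: "\<forall>K. ingrid n K \<longrightarrow> kless ?E K \<longrightarrow> kless K (sw p2) \<longrightarrow> (F \<circ> sw) K = 0"
  proof (intro allI impI)
    fix K assume K: "ingrid n K" "kless ?E K" "kless K (sw p2)"
    have "sw K \<noteq> p1" using K kless_irrefl by (metis sw_sw)
    then show "(F \<circ> sw) K = 0" using DAzero K by (metis comp_apply ingrid_sw sw_sw)
  qed
  from pre_zero[OF lt E vz] have uz: "\<forall>K. ingrid n K \<longrightarrow> kless K ?E \<longrightarrow> F (r K) = 0"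
    and uE: "F (r ?E) \<le> 1" using p1 by auto
  show ?thesis
  proof (cases "kless (sw q) (\<kappa> q)")
    case True
    then show ?thesis using G_node[OF bij1 lt mono pre Fq q] by blast
  next
    case False
    then have g2: "\<not> kless (sw q) ?E" "kless ?E (\<kappa> q)"
      "r ?E = p2 \<or> (kless ?E (\<kappa> p1) \<and> kless (\<kappa> p1) (sw p2))
        \<or> (kless ?E (\<kappa> p2) \<and> kless (\<kappa> p2) (sw p2))
        \<or> (kless (sw (r ?E)) (sw p2) \<and> r ?E \<noteq> p1)" using geo by blast+
    show ?thesis
    proof (cases "F (r ?E) = 0")
      case True
      have "\<exists>D. ingrid n D \<and> kless D (\<kappa> q) \<and>
        (\<forall>K. ingrid n K \<longrightarrow> kless K D \<longrightarrow> F (r K) = F (sw K)) \<and> F (r D) < F (sw D)"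
      proof (intro exI conjI)
        show "ingrid n ?E" by (rule E)
        show "kless ?E (\<kappa> q)" by (rule g2(2))
        show "\<forall>K. ingrid n K \<longrightarrow> kless K ?E \<longrightarrow> F (r K) = F (sw K)" using uz vz by simp
        show "F (r ?E) < F (sw ?E)" using True p1 by simp
      qed
      then show ?thesis using G_node[OF bij1 lt mono pre Fq q] by blast
    next
      case False
      have tz: "\<forall>K. ingrid n K \<longrightarrow> kless ?E K \<longrightarrow> kless K (sw p2) \<longrightarrow> (F \<circ> r) K = 0"
        by (rule tie_zero[OF lt E vz _ vz2]) (use False p1 in simp)
      have s: "ingrid n (r ?E)" using bij1 E by blast
      consider (a) "r ?E = p2" | (b) "kless ?E (\<kappa> p1)" "kless (\<kappa> p1) (sw p2)"
        | (c) "kless ?E (\<kappa> p2)" "kless (\<kappa> p2) (sw p2)"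
        | (d) "kless (sw (r ?E)) (sw p2)" "r ?E \<noteq> p1" using g2(3) by blast
      then show ?thesis
      proof cases
        case a
        then have "F' p2 = 0" using uE p2(5) by simp
        show ?thesis
        proof (rule W2k[OF E])
          show "\<forall>K. ingrid n K \<longrightarrow> kless K ?E \<longrightarrow> (F' \<circ> r) K \<le> (F' \<circ> sw) K"
          proof (intro allI impI)
            fix K assume K: "ingrid n K" "kless K ?E"
            have "K \<noteq> \<kappa> q" using K g2(2) kless_trans kless_irrefl by blast
            then have "r K \<noteq> q" using bij1 K by metis
            then have "F' (r K) \<le> F (r K)" using mono bij1 K by blast
            then show "(F' \<circ> r) K \<le> (F' \<circ> sw) K" using uz K by simp
          qed
          have "F' p1 \<ge> 1"
          proof (cases "p1 = q")
            case True then show ?thesis using Fq p1 by simp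
          next
            case False then have "F' p1 = F p1" using same p1(1) p2(3) by metis
            then show ?thesis using p1 by simp
          qed
          then show "(F' \<circ> r) ?E < (F' \<circ> sw) ?E" using a \<open>F' p2 = 0\<close> by simp
        qed
      next
        case b
        have "ingrid n (\<kappa> p1)" using bij2 p1 by blast
        then have "F (r (\<kappa> p1)) = 0" using tz b by (metis comp_apply)
        then show ?thesis using bij2 p1 by simp
      next
        case c
        have "ingrid n (\<kappa> p2)" using bij2 p2 by blast
        then have "F (r (\<kappa> p2)) = 0" using tz c by (metis comp_apply)
        then show ?thesis using bij2 p2 by simp
      next
        case d
        then have "F (r ?E) = 0" using DAzero s by blast
        then show ?thesis using False by simp
      qed
    qed
  qed
qed

definition rAD :: "nat \<Rightarrow> nat \<times> nat \<Rightarrow> nat \<times> nat" where "rAD n K = (n+1-snd K, fst K)"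
definition kAD :: "nat \<Rightarrow> nat \<times> nat \<Rightarrow> nat \<times> nat" where "kAD n x = (snd x, n+1-fst x)"
definition rAB :: "nat \<Rightarrow> nat \<times> nat \<Rightarrow> nat \<times> nat" where "rAB n K = (n+1-fst K, snd K)"
definition rBA :: "nat \<Rightarrow> nat \<times> nat \<Rightarrow> nat \<times> nat" where "rBA n K = (n+1-fst K, n+1-snd K)"
definition rBC :: "nat \<Rightarrow> nat \<times> nat \<Rightarrow> nat \<times> nat" where "rBC n K = (n+1-snd K, n+1-fst K)"
definition rCB :: "nat \<Rightarrow> nat \<times> nat \<Rightarrow> nat \<times> nat" where "rCB n K = (snd K, n+1-fst K)"
definition kCB :: "nat \<Rightarrow> nat \<times> nat \<Rightarrow> nat \<times> nat" where "kCB n x = (n+1-snd x, fst x)"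
definition rCD :: "nat \<Rightarrow> nat \<times> nat \<Rightarrow> nat \<times> nat" where "rCD n K = (fst K, n+1-snd K)"

definition geo_disj where
 "geo_disj r \<kappa> p1 p2 q \<longleftrightarrow> kless (sw q) (\<kappa> q) \<or> (\<not> kless (sw q) (sw p1) \<and> kless (sw p1) (\<kappa> q) \<and>
       (r (sw p1) = p2 \<or> (kless (sw p1) (\<kappa> p1) \<and> kless (\<kappa> p1) (sw p2))
        \<or> (kless (sw p1) (\<kappa> p2) \<and> kless (\<kappa> p2) (sw p2))
        \<or> (kless (sw (r (sw p1))) (sw p2) \<and> r (sw p1) \<noteq> p1)))"

lemma gd_D1: "kless (sw q) (\<kappa> q) \<Longrightarrow> geo_disj r \<kappa> p1 p2 q"
  unfolding geo_disj_def by blast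
lemma gd_Z: "\<not> kless (sw q) (sw p1) \<Longrightarrow> kless (sw p1) (\<kappa> q) \<Longrightarrow> r (sw p1) = p2 \<Longrightarrow> geo_disj r \<kappa> p1 p2 q"
  unfolding geo_disj_def by blast
lemma gd_P1: "\<not> kless (sw q) (sw p1) \<Longrightarrow> kless (sw p1) (\<kappa> q) \<Longrightarrow> kless (sw p1) (\<kappa> p1) \<Longrightarrow> kless (\<kappa> p1) (sw p2) \<Longrightarrow> geo_disj r \<kappa> p1 p2 q"
  unfolding geo_disj_def by blast
lemma gd_P2: "\<not> kless (sw q) (sw p1) \<Longrightarrow> kless (sw p1) (\<kappa> q) \<Longrightarrow> kless (sw p1) (\<kappa> p2) \<Longrightarrow> kless (\<kappa> p2) (sw p2) \<Longrightarrow> geo_disj r \<kappa> p1 p2 q"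
  unfolding geo_disj_def by blast

definition geo_hyp where
 "geo_hyp n m i1 i2 j2 \<longleftrightarrow> n = 2*m \<and> 2 \<le> i1 \<and> i1 \<le> m \<and> 1 \<le> i2 \<and> i2 \<le> n \<and> 1 \<le> j2 \<and> j2 \<le> n
   \<and> \<not>((i2=1 \<or> i2=n) \<and> (j2=1 \<or> j2=n)) \<and> (j2 = 1 \<longrightarrow> i1 < i2)
   \<and> (i2 = 1 \<longrightarrow> i1 \<le> j2) \<and> (j2 = 1 \<longrightarrow> i1 + i2 \<le> n+1) \<and> (i2 = n \<longrightarrow> i1 \<le> j2)
   \<and> (i2 = n \<longrightarrow> i1 + j2 \<le> n+1) \<and> (j2 = n \<longrightarrow> i1 + i2 \<le> n+1) \<and> (j2 = n \<longrightarrow> i1 \<le> i2)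
   \<and> (i2 = 1 \<longrightarrow> i1 + j2 \<le> n+1)"

lemma alg2_cases:
  assumes "n = 2*m" "1 \<le> j2"
  obtains (T1) "j2 = 1" "alg2_target n (i2,j2) = (i2-1, j2)"
  | (T2) "j2 = 2" "i2 > 2" "alg2_target n (i2,j2) = (i2-1, j2)"
  | (T3) "i2 = n" "3 \<le> j2" "j2 \<le> m" "alg2_target n (i2,j2) = (i2-1, j2)"
  | (T4) "j2 \<noteq> 1" "j2 = 2 \<longrightarrow> i2 \<le> 2" "i2 = n \<longrightarrow> j2 \<le> m \<longrightarrow> j2 \<le> 2" "alg2_target n (i2,j2) = (i2, j2-1)"
proof (cases "j2 = 1 \<or> (j2 = 2 \<and> i2 > 2) \<or> (i2 = n \<and> j2 \<le> n div 2)")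
  case True
  then have q: "alg2_target n (i2,j2) = (i2-1, j2)" unfolding alg2_target_def by simp
  have nd: "n div 2 = m" using assms by simp
  show ?thesis
  proof (cases "j2 = 1")
    case True then show ?thesis using T1 q by blast
  next
    case F1: False
    show ?thesis
    proof (cases "j2 = 2 \<and> i2 > 2")
      case True then show ?thesis using T2 q by blast
    next
      case False
      then have "i2 = n" "j2 \<le> m" using \<open>j2 = 1 \<or> (j2 = 2 \<and> i2 > 2) \<or> (i2 = n \<and> j2 \<le> n div 2)\<close> F1 nd by auto
      moreover have "3 \<le> j2" using False F1 calculation assms by (cases j2) auto
      ultimately show ?thesis using T3 q by blast
    qed
  qed
next
  case False
  then have q: "alg2_target n (i2,j2) = (i2, j2-1)" unfolding alg2_target_def by auto
  have nd: "n div 2 = m" using assms by simp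
  show ?thesis using T4 q False nd by auto
qed

locale geoloc =
  fixes n m i1 i2 j2 :: nat
  assumes nm: "n = 2*m" and i1: "2 \<le> i1" "i1 \<le> m"
    and i2: "1 \<le> i2" "i2 \<le> n" and j2: "1 \<le> j2" "j2 \<le> n"
    and nc: "\<not>((i2=1 \<or> i2=n) \<and> (j2=1 \<or> j2=n))"
    and cDA: "j2 = 1 \<longrightarrow> i1 < i2"
    and cDC: "i2 = 1 \<longrightarrow> i1 \<le> j2" and cAD: "j2 = 1 \<longrightarrow> i1 + i2 \<le> n+1"
    and cAB: "i2 = n \<longrightarrow> i1 \<le> j2" and cBA: "i2 = n \<longrightarrow> i1 + j2 \<le> n+1"
    and cBC: "j2 = n \<longrightarrow> i1 + i2 \<le> n+1" and cCB: "j2 = n \<longrightarrow> i1 \<le> i2"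
    and cCD: "i2 = 1 \<longrightarrow> i1 + j2 \<le> n+1"

context geoloc
begin

lemma m2: "2 \<le> m" "4 \<le> n" using nm i1 by auto

lemmas Bf = nm i1 i2 j2 m2

lemma cases4:
  obtains (T1) "j2 = 1" "i1 < i2" "i1 + i2 \<le> n+1" "i2 < n" "alg2_target n (i2,j2) = (i2-1, 1)"
  | (T2) "j2 = 2" "i2 > 2" "i2 = n \<longrightarrow> i1 = 2" "alg2_target n (i2,j2) = (i2-1, 2)"
  | (T3) "i2 = n" "3 \<le> j2" "j2 \<le> m" "i1 \<le> j2" "alg2_target n (i2,j2) = (n-1, j2)"
  | (T4a) "j2 = 2" "i2 \<le> 2" "alg2_target n (i2,j2) = (i2, 1)"
  | (T4b) "3 \<le> j2" "i2 = n \<longrightarrow> m < j2" "alg2_target n (i2,j2) = (i2, j2-1)"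
proof (rule alg2_cases[OF nm j2(1), of i2])
  assume "j2 = 1" "alg2_target n (i2,j2) = (i2-1, j2)"
  then show thesis using T1 cDA cAD nc i2 by fastforce
next
  assume "j2 = 2" "i2 > 2" "alg2_target n (i2,j2) = (i2-1, j2)"
  then show thesis using T2 cAB i1 by fastforce
next
  assume "i2 = n" "3 \<le> j2" "j2 \<le> m" "alg2_target n (i2,j2) = (i2-1, j2)"
  then show thesis using T3 cAB by fastforce
next
  assume a: "j2 \<noteq> 1" "j2 = 2 \<longrightarrow> i2 \<le> 2" "i2 = n \<longrightarrow> j2 \<le> m \<longrightarrow> j2 \<le> 2" "alg2_target n (i2,j2) = (i2, j2-1)"
  show thesis
  proof (cases "j2 = 2")
    case True then show thesis using T4a a by fastforce
  next
    case False
    then have "3 \<le> j2" using a j2 by linarith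
    moreover have "i2 = n \<longrightarrow> m < j2" using a calculation by auto
    ultimately show thesis using T4b a by blast
  qed
qed

end

context geoloc begin
lemma geo_AD: "geo_disj (rAD n) (kAD n) (i1,1) (i2,j2) (alg2_target n (i2,j2))"
proof (cases rule: cases4)
  case T1
  consider "2*i2 \<le> n+2" | "2*i2 > n+2" "i1+i2 = n+1" | "2*i2 > n+2" "i1+i2 \<noteq> n+1" by linarith
  then show ?thesis
  proof cases
    case 1 then show ?thesis using Bf T1 by (intro gd_D1; simp add: kless_def sw_def kAD_def; arith?)
  next
    case 2 then show ?thesis using Bf T1 by (intro gd_Z; simp add: kless_def sw_def kAD_def rAD_def; arith?)
  next
    case 3 then show ?thesis using Bf T1 by (intro gd_P2; simp add: kless_def sw_def kAD_def rAD_def; arith?)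
  qed
next
  case T2 then show ?thesis using Bf by (intro gd_P1; simp add: kless_def sw_def kAD_def; arith?)
next
  case T3 then show ?thesis using Bf by (intro gd_P1; simp add: kless_def sw_def kAD_def; arith?)
next
  case T4a then show ?thesis using Bf by (intro gd_D1; simp add: kless_def sw_def kAD_def; arith?)
next
  case T4b
  consider "2*i2 \<le> n" | "2*i2 > n" by linarith
  then show ?thesis
  proof cases
    case 1 then show ?thesis using Bf T4b by (intro gd_D1; simp add: kless_def sw_def kAD_def; arith?)
  next
    case 2 then show ?thesis using Bf T4b by (intro gd_P1; simp add: kless_def sw_def kAD_def; arith?)
  qed
qed

lemma geo_AB: "geo_disj (rAB n) (rAB n) (i1,1) (i2,j2) (alg2_target n (i2,j2)) \<or> (i2 = n \<and> j2 = m+1 \<and> i1 = m)"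
proof (cases rule: cases4)
  case T1 then show ?thesis using Bf by (intro disjI1 gd_D1; simp add: kless_def sw_def rAB_def; arith?)
next
  case T2
  consider "i2 < n" | "i2 = n" using Bf by linarith
  then show ?thesis
  proof cases
    case 1 then show ?thesis using Bf T2 by (intro disjI1 gd_D1; simp add: kless_def sw_def rAB_def; arith?)
  next
    case 2 then show ?thesis using Bf T2 by (intro disjI1 gd_Z; simp add: kless_def sw_def rAB_def; arith?)
  qed
next
  case T3
  consider "j2 = i1" | "i1 < j2" using T3 by linarith
  then show ?thesis
  proof cases
    case 1 then show ?thesis using Bf T3 by (intro disjI1 gd_Z; simp add: kless_def sw_def rAB_def; arith?)
  next
    case 2 then show ?thesis using Bf T3 by (intro disjI1 gd_P2; simp add: kless_def sw_def rAB_def; arith?)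
  qed
next
  case T4a then show ?thesis using Bf by (intro disjI1 gd_D1; simp add: kless_def sw_def rAB_def; arith?)
next
  case T4b
  consider "i2+j2 \<le> n+1 \<or> (i2+j2 = n+2 \<and> i2 < j2-1)" | "i2 = n" "j2 = m+1" "i1 = m"
    | "\<not> (i2+j2 \<le> n+1 \<or> (i2+j2 = n+2 \<and> i2 < j2-1))" "i2 < n"
    | "\<not> (i2+j2 \<le> n+1 \<or> (i2+j2 = n+2 \<and> i2 < j2-1))" "i2 = n" "i1 + 1 < j2"
    using T4b Bf by linarith
  then show ?thesis
  proof cases
    case 1 then show ?thesis using Bf T4b by (intro disjI1 gd_D1; simp add: kless_def sw_def rAB_def; arith?)
  next
    case 2 then show ?thesis by blast
  next
    case 3 then show ?thesis using Bf T4b by (intro disjI1 gd_P2; simp add: kless_def sw_def rAB_def; arith?)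
  next
    case 4 then show ?thesis using Bf T4b by (intro disjI1 gd_P2; simp add: kless_def sw_def rAB_def; arith?)
  qed
qed

lemma geo_BA: "geo_disj (rBA n) (rBA n) (i1,1) (i2,j2) (alg2_target n (i2,j2))"
proof (cases rule: cases4)
  case T1 then show ?thesis using Bf by (intro gd_D1; simp add: kless_def sw_def rBA_def; arith?)
next
  case T2
  consider "i2 < n" | "i2 = n" using Bf by linarith
  then show ?thesis
  proof cases
    case 1 then show ?thesis using Bf T2 by (intro gd_D1; simp add: kless_def sw_def rBA_def; arith?)
  next
    case 2 then show ?thesis using Bf T2 by (intro gd_P2; simp add: kless_def sw_def rBA_def; arith?)
  qed
next
  case T3 then show ?thesis using Bf by (intro gd_P2; simp add: kless_def sw_def rBA_def; arith?)
next
  case T4a then show ?thesis using Bf by (intro gd_D1; simp add: kless_def sw_def rBA_def; arith?)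
next
  case T4b
  consider "i2+j2 \<le> n+1" | "i2 = n" "i1 + j2 = n+1" | "i2+j2 > n+1" "i2 < n"
    | "i2+j2 > n+1" "i2 = n" "i1 + j2 < n+1"
    using T4b Bf cBA by linarith
  then show ?thesis
  proof cases
    case 1 then show ?thesis using Bf T4b by (intro gd_D1; simp add: kless_def sw_def rBA_def; arith?)
  next
    case 2 then show ?thesis using Bf T4b by (intro gd_Z; simp add: kless_def sw_def rBA_def; arith?)
  next
    case 3 then show ?thesis using Bf T4b by (intro gd_P2; simp add: kless_def sw_def rBA_def; arith?)
  next
    case 4 then show ?thesis using Bf T4b by (intro gd_P2; simp add: kless_def sw_def rBA_def; arith?)
  qed
qed

lemma geo_BC: "geo_disj (rBC n) (rBC n) (i1,1) (i2,j2) (alg2_target n (i2,j2))"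
proof (cases rule: cases4)
  case T1 then show ?thesis using Bf by (intro gd_D1; simp add: kless_def sw_def rBC_def; arith?)
next
  case T2 then show ?thesis using Bf by (intro gd_D1; simp add: kless_def sw_def rBC_def; arith?)
next
  case T3 then show ?thesis using Bf by (intro gd_D1; simp add: kless_def sw_def rBC_def; arith?)
next
  case T4a then show ?thesis using Bf by (intro gd_D1; simp add: kless_def sw_def rBC_def; arith?)
next
  case T4b
  consider "2*j2 \<le> n+2" | "j2 = n" "i1 + i2 = n+1" | "2*j2 > n+2" "j2 < n"
    | "2*j2 > n+2" "j2 = n" "i1 + i2 < n+1"
    using T4b Bf cBC by linarith
  then show ?thesis
  proof cases
    case 1 then show ?thesis using Bf T4b by (intro gd_D1; simp add: kless_def sw_def rBC_def; arith?)
  next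
    case 2 then show ?thesis using Bf T4b by (intro gd_Z; simp add: kless_def sw_def rBC_def; arith?)
  next
    case 3 then show ?thesis using Bf T4b by (intro gd_P2; simp add: kless_def sw_def rBC_def; arith?)
  next
    case 4 then show ?thesis using Bf T4b by (intro gd_P2; simp add: kless_def sw_def rBC_def; arith?)
  qed
qed

lemma geo_CB: "geo_disj (rCB n) (kCB n) (i1,1) (i2,j2) (alg2_target n (i2,j2))"
proof (cases rule: cases4)
  case T1 then show ?thesis using Bf by (intro gd_D1; simp add: kless_def sw_def kCB_def; arith?)
next
  case T2 then show ?thesis using Bf by (intro gd_D1; simp add: kless_def sw_def kCB_def; arith?)
next
  case T3 then show ?thesis using Bf by (intro gd_D1; simp add: kless_def sw_def kCB_def; arith?)
next
  case T4a then show ?thesis using Bf by (intro gd_D1; simp add: kless_def sw_def kCB_def; arith?)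
next
  case T4b
  consider "2*j2 \<le> n+2" | "j2 = n" "i1 = i2" | "2*j2 > n+2" "j2 < n"
    | "2*j2 > n+2" "j2 = n" "i1 < i2"
    using T4b Bf cCB by linarith
  then show ?thesis
  proof cases
    case 1 then show ?thesis using Bf T4b by (intro gd_D1; simp add: kless_def sw_def kCB_def; arith?)
  next
    case 2 then show ?thesis using Bf T4b by (intro gd_Z; simp add: kless_def sw_def kCB_def rCB_def; arith?)
  next
    case 3 then show ?thesis using Bf T4b by (intro gd_P2; simp add: kless_def sw_def kCB_def; arith?)
  next
    case 4 then show ?thesis using Bf T4b by (intro gd_P2; simp add: kless_def sw_def kCB_def; arith?)
  qed
qed

lemma geo_CD: "geo_disj (rCD n) (rCD n) (i1,1) (i2,j2) (alg2_target n (i2,j2))"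
proof (cases rule: cases4)
  case T1 then show ?thesis using Bf by (intro gd_D1; simp add: kless_def sw_def rCD_def; arith?)
next
  case T2 then show ?thesis using Bf by (intro gd_D1; simp add: kless_def sw_def rCD_def; arith?)
next
  case T3 then show ?thesis using Bf by (intro gd_D1; simp add: kless_def sw_def rCD_def; arith?)
next
  case T4a then show ?thesis using Bf by (intro gd_D1; simp add: kless_def sw_def rCD_def; arith?)
next
  case T4b
  show ?thesis
  proof (cases "j2 \<le> i2 \<or> (j2 = i2+1 \<and> i2 + j2 < n+2)")
    case True then show ?thesis using Bf T4b by (intro gd_D1; simp add: kless_def sw_def rCD_def; arith?)
  next
    case False
    then have F: "i2 + 1 \<le> j2" "n+2 \<le> i2 + j2 \<or> i2 + 1 < j2" by auto
    have G: "1 < i2 \<or> i1 + j2 \<le> n+1" using cCD i2 by auto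
    show ?thesis
    proof (cases "i1 < j2")
      case True then show ?thesis using Bf T4b F G by (intro gd_P1; simp add: kless_def sw_def rCD_def; arith?)
    next
      case False then show ?thesis using Bf T4b F G by (intro gd_P2; simp add: kless_def sw_def rCD_def; arith?)
    qed
  qed
qed

end

lemma geoA:
  assumes "n = 2*m" "2 \<le> i1" "i1 \<le> m"
  shows "kless (sw (i1-1,1)) (kAD n (i1-1,1))" "kless (sw (i1-1,1)) (rAB n (i1-1,1))"
    "kless (sw (i1-1,1)) (rBA n (i1-1,1))" "kless (sw (i1-1,1)) (rBC n (i1-1,1))"
    "kless (sw (i1-1,1)) (kCB n (i1-1,1))" "kless (sw (i1-1,1)) (rCD n (i1-1,1))"
proof -
  show "kless (sw (i1-1,1)) (kAD n (i1-1,1))" using assms by (simp add: kless_def sw_def kAD_def; arith?)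
  show "kless (sw (i1-1,1)) (rAB n (i1-1,1))" using assms by (simp add: kless_def sw_def rAB_def; arith?)
  show "kless (sw (i1-1,1)) (rBA n (i1-1,1))" using assms by (simp add: kless_def sw_def rBA_def; arith?)
  show "kless (sw (i1-1,1)) (rBC n (i1-1,1))" using assms by (simp add: kless_def sw_def rBC_def; arith?)
  show "kless (sw (i1-1,1)) (kCB n (i1-1,1))" using assms by (simp add: kless_def sw_def kCB_def; arith?)
  show "kless (sw (i1-1,1)) (rCD n (i1-1,1))" using assms by (simp add: kless_def sw_def rCD_def; arith?)
qed

definition Fp :: "(nat \<Rightarrow> nat \<Rightarrow> nat) \<Rightarrow> nat \<times> nat \<Rightarrow> nat" where
  "Fp f x = f (fst x) (snd x)"

lemma lam_DA_rep: "lam_DA n f = wk n (Fp f \<circ> sw)" by (simp add: lam_DA_def wk_def Fp_def sw_def)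
lemma lam_DC_rep: "lam_DC n f = wk n (Fp f \<circ> id)" by (simp add: lam_DC_def wk_def Fp_def)
lemma lam_AD_rep: "lam_AD n f = wk n (Fp f \<circ> rAD n)" by (simp add: lam_AD_def wk_def Fp_def rAD_def)
lemma lam_AB_rep: "lam_AB n f = wk n (Fp f \<circ> rAB n)" by (simp add: lam_AB_def wk_def Fp_def rAB_def)
lemma lam_BA_rep: "lam_BA n f = wk n (Fp f \<circ> rBA n)" by (simp add: lam_BA_def wk_def Fp_def rBA_def)
lemma lam_BC_rep: "lam_BC n f = wk n (Fp f \<circ> rBC n)" by (simp add: lam_BC_def wk_def Fp_def rBC_def)
lemma lam_CB_rep: "lam_CB n f = wk n (Fp f \<circ> rCB n)" by (simp add: lam_CB_def wk_def Fp_def rCB_def)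
lemma lam_CD_rep: "lam_CD n f = wk n (Fp f \<circ> rCD n)" by (simp add: lam_CD_def wk_def Fp_def rCD_def)

definition bijp :: "nat \<Rightarrow> (nat \<times> nat \<Rightarrow> nat \<times> nat) \<Rightarrow> (nat \<times> nat \<Rightarrow> nat \<times> nat) \<Rightarrow> bool" where
  "bijp n r \<kappa> \<longleftrightarrow> (\<forall>K. ingrid n K \<longrightarrow> ingrid n (r K) \<and> \<kappa> (r K) = K)
     \<and> (\<forall>x. ingrid n x \<longrightarrow> ingrid n (\<kappa> x) \<and> r (\<kappa> x) = x)"

lemma bij_DC: "bijp n id id" by (auto simp: bijp_def)
lemma bij_AD: "bijp n (rAD n) (kAD n)" by (auto simp: bijp_def ingrid_def rAD_def kAD_def)
lemma bij_AB: "bijp n (rAB n) (rAB n)" by (auto simp: bijp_def ingrid_def rAB_def)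
lemma bij_BA: "bijp n (rBA n) (rBA n)" by (auto simp: bijp_def ingrid_def rBA_def)
lemma bij_BC: "bijp n (rBC n) (rBC n)" by (auto simp: bijp_def ingrid_def rBC_def)
lemma bij_CB: "bijp n (rCB n) (kCB n)" by (auto simp: bijp_def ingrid_def rCB_def kCB_def)
lemma bij_CD: "bijp n (rCD n) (rCD n)" by (auto simp: bijp_def ingrid_def rCD_def)

lemma nodes_nth: "x < n*n \<Longrightarrow> nodes_DA n ! x = (x mod n + 1, x div n + 1)"
  unfolding nodes_DA_def by (rule word_nth)

lemma nodes_len: "length (nodes_DA n) = n*n" unfolding nodes_DA_def by simp

lemma nodes_set: "set (nodes_DA n) = {x. ingrid n x}"
proof (intro set_eqI iffI)
  fix x assume "x \<in> set (nodes_DA n)"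
  then obtain i where i: "i < n*n" "x = nodes_DA n ! i" by (metis in_set_conv_nth nodes_len)
  then have n0: "n > 0" by (cases n) auto
  have "i div n < n" using i n0 by (simp add: div_less_iff_less_mult)
  moreover have "i mod n < n" using n0 by simp
  ultimately show "x \<in> {x. ingrid n x}" using i nodes_nth[OF i(1)] n0 by (auto simp: ingrid_def Suc_le_eq)
next
  fix x assume "x \<in> {x. ingrid n x}"
  then have x: "ingrid n (sw x)" by simp
  have "nodes_DA n ! kidx n (sw x) = x" unfolding nodes_DA_def using word_nth_key[OF x, of "\<lambda>k l. (l,k)"]
    by (simp add: sw_def)
  then show "x \<in> set (nodes_DA n)" using key_idx(1)[OF x] by (metis nth_mem nodes_len)
qed

lemma nodes_sorted: "sorted_wrt (\<lambda>a b. kless (sw a) (sw b)) (nodes_DA n)"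
proof (unfold sorted_wrt_iff_nth_less, intro allI impI)
  fix i j assume ij: "i < j" "j < length (nodes_DA n)"
  then have j: "j < n*n" and i: "i < n*n" by (simp_all add: nodes_len)
  then have n0: "n > 0" by (cases n) auto
  show "kless (sw (nodes_DA n ! i)) (sw (nodes_DA n ! j))"
    using nodes_nth[OF i] nodes_nth[OF j] idx_less_iff[OF n0, of i j] ij by (simp add: sw_def)
qed

lemma filter_first:
  assumes "sorted_wrt R xs" "\<forall>a b. R a b \<longrightarrow> \<not> R b a" "filter P xs = y # ys"
  shows "y \<in> set xs \<and> P y \<and> (\<forall>x\<in>set xs. R x y \<longrightarrow> \<not> P x) \<and>
    (\<forall>z zs. ys = z # zs \<longrightarrow> z \<in> set xs \<and> P z \<and> R y z \<and> (\<forall>x\<in>set xs. R y x \<longrightarrow> R x z \<longrightarrow> \<not> P x))"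
  using assms
proof (induction xs arbitrary: y ys)
  case Nil then show ?case by simp
next
  case (Cons a as)
  have sa: "sorted_wrt R as" and ra: "\<forall>x\<in>set as. R a x" using Cons.prems(1) by auto
  have asy: "R u v \<Longrightarrow> \<not> R v u" for u v using Cons.prems(2) by blast
  show ?case
  proof (cases "P a")
    case True
    then have ya: "y = a" and ys: "ys = filter P as" using Cons.prems(3) by auto
    have part1: "\<forall>x\<in>set (a # as). R x y \<longrightarrow> \<not> P x"
    proof (intro ballI impI)
      fix x assume x: "x \<in> set (a # as)" "R x y"
      show "\<not> P x"
      proof (cases "x = a")
        case True then show ?thesis using x(2) ya asy by blast
      next
        case False then have "x \<in> set as" using x(1) by simp
        then have "R a x" using ra by blast
        then show ?thesis using x(2) ya asy by blast
      qed
    qed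
    have part2: "z \<in> set (a#as) \<and> P z \<and> R y z \<and> (\<forall>x\<in>set (a#as). R y x \<longrightarrow> R x z \<longrightarrow> \<not> P x)"
      if zs: "ys = z # zs" for z zs
    proof -
      have "filter P as = z # zs" using zs ys by simp
      from Cons.IH[OF sa Cons.prems(2) this]
      have IH: "z \<in> set as" "P z" "\<forall>x\<in>set as. R x z \<longrightarrow> \<not> P x" by blast+
      have "R y z" using ra IH(1) ya by blast
      moreover have "\<forall>x\<in>set (a#as). R y x \<longrightarrow> R x z \<longrightarrow> \<not> P x"
      proof (intro ballI impI)
        fix x assume x: "x \<in> set (a#as)" "R y x" "R x z"
        have "x \<noteq> a" using x(2) ya asy by blast
        then have "x \<in> set as" using x(1) by simp
        then show "\<not> P x" using IH(3) x(3) by blast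
      qed
      ultimately show ?thesis using IH(1,2) by simp
    qed
    have "y \<in> set (a # as)" "P y" using ya True by simp_all
    then show ?thesis using part1 part2 by blast
  next
    case False
    then have f: "filter P as = y # ys" using Cons.prems(3) by simp
    from Cons.IH[OF sa Cons.prems(2) f]
    have IH: "y \<in> set as" "P y" "\<forall>x\<in>set as. R x y \<longrightarrow> \<not> P x"
      "\<forall>z zs. ys = z # zs \<longrightarrow> z \<in> set as \<and> P z \<and> R y z \<and> (\<forall>x\<in>set as. R y x \<longrightarrow> R x z \<longrightarrow> \<not> P x)"
      by blast+
    have p1: "\<forall>x\<in>set (a # as). R x y \<longrightarrow> \<not> P x" using IH(3) False by simp
    have p2: "\<forall>z zs. ys = z # zs \<longrightarrow> z \<in> set (a#as) \<and> P z \<and> R y z \<and> (\<forall>x\<in>set (a#as). R y x \<longrightarrow> R x z \<longrightarrow> \<not> P x)"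
      using IH(4) False by simp
    show ?thesis using IH(1,2) p1 p2 by simp
  qed
qed

lemma kless_asym_sw: "\<forall>a b. kless (sw a) (sw b) \<longrightarrow> \<not> kless (sw b) (sw a)"
  using kless_asym by blast

lemma duo:
  assumes "p \<in> leading_duo n f" "ingrid n r0" "f (fst r0) (snd r0) \<noteq> 0"
  obtains p1 where "ingrid n p1" "Fp f p1 \<noteq> 0" "\<forall>x. ingrid n x \<longrightarrow> kless (sw x) (sw p1) \<longrightarrow> Fp f x = 0"
    "p = p1 \<or> (Fp f p1 = 1 \<and> ingrid n p \<and> Fp f p \<noteq> 0 \<and> kless (sw p1) (sw p) \<and>
       (\<forall>x. ingrid n x \<longrightarrow> kless (sw p1) (sw x) \<longrightarrow> kless (sw x) (sw p) \<longrightarrow> Fp f x = 0))"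
proof -
  let ?P = "\<lambda>(i, j). f i j \<noteq> 0"
  have occ: "occupied_DA n f = filter ?P (nodes_DA n)" unfolding occupied_DA_def by simp
  have "r0 \<in> set (filter ?P (nodes_DA n))" using assms(2,3) nodes_set by (cases r0) auto
  then have "filter ?P (nodes_DA n) \<noteq> []" by (metis empty_iff empty_set)
  then obtain y ys where yys: "filter ?P (nodes_DA n) = y # ys" by (meson neq_Nil_conv)
  note ff = filter_first[OF nodes_sorted kless_asym_sw yys]
  have Pe: "?P x \<longleftrightarrow> Fp f x \<noteq> 0" for x by (cases x) (simp add: Fp_def)
  have y1: "ingrid n y" using ff nodes_set by auto
  have y2: "Fp f y \<noteq> 0" using ff Pe by blast
  have y3: "\<forall>x. ingrid n x \<longrightarrow> kless (sw x) (sw y) \<longrightarrow> Fp f x = 0"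
  proof (intro allI impI)
    fix x assume x: "ingrid n x" "kless (sw x) (sw y)"
    then have "x \<in> set (nodes_DA n)" using nodes_set by simp
    then have "\<not> ?P x" using ff x(2) by blast
    then show "Fp f x = 0" using Pe by blast
  qed
  have ld: "leading_duo n f = (if Fp f y = 1 then set (take 2 (y # ys)) else set (take 1 (y # ys)))"
    unfolding leading_duo_def Let_def occ yys by (simp add: Fp_def)
  show thesis
  proof (cases "p = y")
    case True then show thesis using that y1 y2 y3 by blast
  next
    case False
    then have f1: "Fp f y = 1" using assms(1) ld by (auto split: if_splits)
    moreover obtain zs where zs: "ys = p # zs" using False assms(1) ld
      by (cases ys) (auto split: if_splits)
    have z: "p \<in> set (nodes_DA n)" "?P p" "kless (sw y) (sw p)"
      "\<forall>x\<in>set (nodes_DA n). kless (sw y) (sw x) \<longrightarrow> kless (sw x) (sw p) \<longrightarrow> \<not> ?P x"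
      using ff zs by blast+
    have z3: "\<forall>x. ingrid n x \<longrightarrow> kless (sw y) (sw x) \<longrightarrow> kless (sw x) (sw p) \<longrightarrow> Fp f x = 0"
    proof (intro allI impI)
      fix x assume x: "ingrid n x" "kless (sw y) (sw x)" "kless (sw x) (sw p)"
      then have "x \<in> set (nodes_DA n)" using nodes_set by simp
      then have "\<not> ?P x" using z(4) x by blast
      then show "Fp f x = 0" using Pe by blast
    qed
    have "ingrid n p" using z(1) nodes_set by simp
    moreover have "Fp f p \<noteq> 0" using z(2) Pe by blast
    ultimately show thesis using that y1 y2 y3 f1 z(3) z3 by blast
  qed
qed

lemma move_facts:
  assumes "p \<noteq> q" "f = cap c" "f' = cap (move c p q)"
  shows "\<forall>x. x \<noteq> q \<longrightarrow> Fp f' x \<le> Fp f x" "\<forall>x. x \<noteq> p \<longrightarrow> x \<noteq> q \<longrightarrow> Fp f' x = Fp f x"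
    "Fp f q \<le> 1 \<longrightarrow> Fp f q < Fp f' q" "Fp f p \<le> 1 \<longrightarrow> Fp f' p = 0" "Fp f q = 0 \<longrightarrow> Fp f' q = 1"
  using assms by (auto simp: Fp_def cap_def move_def)

lemma nz_key:
  assumes "bijp n r \<kappa>" "lex_less (wk n (F \<circ> r)) (wk n (F \<circ> sw))" "ingrid n p1"
    "\<forall>x. ingrid n x \<longrightarrow> kless (sw x) (sw p1) \<longrightarrow> F x = 0"
  shows "\<forall>x. ingrid n x \<longrightarrow> kless (\<kappa> x) (sw p1) \<longrightarrow> F x = 0" "F (r (sw p1)) \<le> F p1"
proof -
  have vz: "\<forall>K. ingrid n K \<longrightarrow> kless K (sw p1) \<longrightarrow> (F \<circ> sw) K = 0"
    using assms(4) by (metis comp_apply ingrid_sw sw_sw)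
  have E: "ingrid n (sw p1)" using assms(3) by simp
  note pz = pre_zero[OF assms(2) E vz]
  show "\<forall>x. ingrid n x \<longrightarrow> kless (\<kappa> x) (sw p1) \<longrightarrow> F x = 0"
    using pz assms(1) unfolding bijp_def by (metis comp_apply)
  show "F (r (sw p1)) \<le> F p1" using pz by simp
qed

lemma bij1_of: "bijp n r \<kappa> \<Longrightarrow> \<forall>K. ingrid n K \<longrightarrow> ingrid n (r K) \<and> \<kappa> (r K) = K"
  unfolding bijp_def by blast
lemma bij2_of: "bijp n r \<kappa> \<Longrightarrow> \<forall>x. ingrid n x \<longrightarrow> ingrid n (\<kappa> x) \<and> r (\<kappa> x) = x"
  unfolding bijp_def by blast

context geoloc begin
lemma q_facts: "ingrid n (alg2_target n (i2,j2)) \<and> kless (sw (alg2_target n (i2,j2))) (sw (i2,j2))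
   \<and> alg2_target n (i2,j2) \<noteq> (i2,j2)"
proof (cases rule: cases4)
  case T1 then show ?thesis using Bf by (simp add: ingrid_def kless_def sw_def; arith?)
next
  case T2 then show ?thesis using Bf by (simp add: ingrid_def kless_def sw_def; arith?)
next
  case T3 then show ?thesis using Bf by (simp add: ingrid_def kless_def sw_def; arith?)
next
  case T4a then show ?thesis using Bf by (simp add: ingrid_def kless_def sw_def; arith?)
next
  case T4b then show ?thesis using Bf by (simp add: ingrid_def kless_def sw_def; arith?)
qed
end

lemma special_AB:
  fixes F F' :: "nat \<times> nat \<Rightarrow> nat"
  assumes nm: "n = 2*m" "2 \<le> m"
    and ltBA: "lex_less (wk n (F \<circ> rBA n)) (wk n (F \<circ> sw))"
    and p1: "p1 = (m,1)" "F p1 = 1" and p: "p = (n, m+1)" "F p \<ge> 1" and q: "q = (n,m)"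
    and mono: "\<forall>x. x \<noteq> q \<longrightarrow> F' x \<le> F x"
    and same: "\<forall>x. x \<noteq> p \<longrightarrow> x \<noteq> q \<longrightarrow> F' x = F x"
    and Fq: "F q = 0 \<longrightarrow> F' q = 1" and Fp: "F p \<le> 1 \<longrightarrow> F' p = 0"
    and dz: "\<forall>x. ingrid n x \<longrightarrow> kless (sw x) (sw p) \<longrightarrow> x \<noteq> p1 \<longrightarrow> F x = 0"
    and nzAB: "\<forall>x. ingrid n x \<longrightarrow> kless (rAB n x) (sw p1) \<longrightarrow> F x = 0"
    and nzBA: "\<forall>x. ingrid n x \<longrightarrow> kless (rBA n x) (sw p1) \<longrightarrow> F x = 0"
  shows "lex_less (wk n (F' \<circ> rAB n)) (wk n (F' \<circ> sw))"
proof -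
  let ?E = "sw p1"
  have E: "?E = (1,m)" "ingrid n ?E" using p1 nm by (auto simp: sw_def ingrid_def)
  have P2: "sw p = (m+1, n)" using p by (simp add: sw_def)
  have vz: "\<forall>K. ingrid n K \<longrightarrow> kless K ?E \<longrightarrow> (F \<circ> sw) K = 0"
  proof (intro allI impI)
    fix K assume K: "ingrid n K" "kless K ?E"
    have "kless (sw (sw K)) (sw p)" using K E P2 by (auto simp: kless_def)
    moreover have "sw K \<noteq> p1" using K kless_irrefl by (metis sw_sw)
    ultimately show "(F \<circ> sw) K = 0" using dz K by (metis comp_apply ingrid_sw)
  qed
  have vz2: "\<forall>K. ingrid n K \<longrightarrow> kless ?E K \<longrightarrow> kless K (sw p) \<longrightarrow> (F \<circ> sw) K = 0"
  proof (intro allI impI)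
    fix K assume K: "ingrid n K" "kless ?E K" "kless K (sw p)"
    have "sw K \<noteq> p1" using K kless_irrefl by (metis sw_sw)
    then show "(F \<circ> sw) K = 0" using dz K by (metis comp_apply ingrid_sw sw_sw)
  qed
  have rE: "rBA n ?E = p" using E p nm by (simp add: rBA_def)
  have tz: "\<forall>K. ingrid n K \<longrightarrow> kless ?E K \<longrightarrow> kless K (sw p) \<longrightarrow> (F \<circ> rBA n) K = 0"
    by (rule tie_zero[OF ltBA E(2) vz _ vz2]) (use rE p1 p in simp)
  have Fp1: "F p \<le> 1" using pre_zero[OF ltBA E(2) vz] rE p1 by simp
  then have F'p: "F' p = 0" using Fp by simp
  have qp1: "q \<noteq> p1" "p \<noteq> p1" "q \<noteq> p" using q p p1 nm by auto
  have F'p1: "F' p1 = 1" using same qp1 p1 by metis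
  have Fq0: "F q = 0"
  proof -
    have "ingrid n q" using q nm by (simp add: ingrid_def)
    moreover have "kless (sw q) (sw p)" using q P2 nm by (simp add: kless_def sw_def)
    ultimately show ?thesis using dz qp1 by blast
  qed
  then have F'q: "F' q = 1" using Fq by simp
  let ?D = "(m, n)"
  show ?thesis
  proof (rule W2k[of n ?D])
    show "ingrid n ?D" using nm by (simp add: ingrid_def)
    show "\<forall>K. ingrid n K \<longrightarrow> kless K ?D \<longrightarrow> (F' \<circ> rAB n) K \<le> (F' \<circ> sw) K"
    proof (intro allI impI)
      fix K assume K: "ingrid n K" "kless K ?D"
      obtain k l where Kkl: "K = (k,l)" by (cases K)
      have k: "1 \<le> k" "k \<le> m" "1 \<le> l" "l \<le> n" using K Kkl by (auto simp: ingrid_def kless_def)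
      let ?x = "rAB n K"
      have x: "?x = (n+1-k, l)" "ingrid n ?x" using Kkl k nm by (auto simp: rAB_def ingrid_def)
      show "(F' \<circ> rAB n) K \<le> (F' \<circ> sw) K"
      proof (cases "K = ?E")
        case True
        then have "?x = q" using E q nm by (simp add: rAB_def)
        then show ?thesis using True F'q F'p1 by simp
      next
        case False
        have xq: "?x \<noteq> q" using False Kkl E q k nm by (auto simp: rAB_def)
        have "F' ?x = 0"
        proof (cases "?x = p")
          case True then show ?thesis using F'p by simp
        next
          case xp: False
          let ?K' = "rBA n ?x"
          have K': "?K' = (k, n+1-l)" "ingrid n ?K'" "rBA n ?K' = ?x" using x k nm by (auto simp: rBA_def ingrid_def)
          have "F ?x = 0"
          proof -
            consider "kless ?K' ?E" | "?K' = ?E" | "kless ?E ?K'" using kless_total by blast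
            then show ?thesis
            proof cases
              case 1 then show ?thesis using nzBA x by blast
            next
              case 2 then have "?x = p" using K'(3) rE by simp
              then show ?thesis using xp by simp
            next
              case 3
              have "kless ?K' (sw p)" using K'(1) P2 k by (simp add: kless_def)
              then have "(F \<circ> rBA n) ?K' = 0" using tz K'(2) 3 by blast
              then show ?thesis using K'(3) by simp
            qed
          qed
          then show ?thesis using mono xq by (metis le_zero_eq)
        qed
        then show ?thesis by simp
      qed
    qed
    have x0: "rAB n ?D = (m+1, n)" using nm by (simp add: rAB_def)
    have x0q: "(m+1, n) \<noteq> q" "(m+1,n) \<noteq> p" using q p nm by auto
    have "F (m+1, n) = 0"
    proof -
      have K': "rBA n (m+1,n) = (m,1)" "ingrid n (m,1)" using nm by (auto simp: rBA_def ingrid_def)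
      have "kless ?E (m,1)" "kless (m,1) (sw p)" using E P2 nm by (auto simp: kless_def)
      then have "(F \<circ> rBA n) (m,1) = 0" using tz K'(2) by blast
      moreover have "rBA n (m,1) = (m+1,n)" using nm by (simp add: rBA_def)
      ultimately show ?thesis by simp
    qed
    then have "F' (m+1,n) = 0" using mono x0q by (metis le_zero_eq)
    moreover have "sw ?D = q" using q by (simp add: sw_def)
    ultimately show "(F' \<circ> rAB n) ?D < (F' \<circ> sw) ?D" using x0 F'q by simp
  qed
qed

theorem lemma3:
  fixes n :: nat and c :: "nat \<Rightarrow> nat \<Rightarrow> nat" and p :: "nat \<times> nat"
  assumes "valid_config n (cap c)"
    and "purely_asymmetric n (cap c)"
    and "p \<in> leading_duo n (cap c)"
  shows "let f' = cap (move c p (alg2_target n p)) in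
           lex_less (lam_CD n f') (lam_DA n f') \<and> lex_less (lam_AD n f') (lam_DA n f') \<and>
           lex_less (lam_CB n f') (lam_DA n f') \<and> lex_less (lam_AB n f') (lam_DA n f') \<and>
           lex_less (lam_BA n f') (lam_DA n f') \<and> lex_less (lam_BC n f') (lam_DA n f')"
proof -
  define f where "f = cap c"
  define q where "q = alg2_target n p"
  define f' where "f' = cap (move c p q)"
  define F where "F = Fp f"
  define F' where "F' = Fp f'"
  have v: "valid_config n f" using assms(1) f_def by simp
  have asym: "asymmetric n f" using assms(2) unfolding purely_asymmetric_def f_def by simp
  have ev: "even n" and corners: "f 1 1 = 0" "f n 1 = 0" "f 1 n = 0" "f n n = 0"
    using v unfolding valid_config_def by auto
  obtain a b where r0: "a \<in> {1..n}" "b \<in> {1..n}" "a = 1 \<or> a = n \<or> b = 1 \<or> b = n" "f a b \<noteq> 0"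
    using v unfolding valid_config_def by blast
  have r0g: "ingrid n (a,b)" using r0 by (simp add: ingrid_def)
  have r0f: "f (fst (a,b)) (snd (a,b)) \<noteq> 0" using r0(4) by simp
  have Fr0: "F (a,b) \<noteq> 0" using r0(4) by (simp add: F_def Fp_def)
  have ltDC: "lex_less (wk n (F \<circ> id)) (wk n (F \<circ> sw))"
    using asym unfolding asymmetric_def lam_DC_rep lam_DA_rep F_def by blast
  have ltAD: "lex_less (wk n (F \<circ> rAD n)) (wk n (F \<circ> sw))"
    using asym unfolding asymmetric_def lam_AD_rep lam_DA_rep F_def by blast
  have ltAB: "lex_less (wk n (F \<circ> rAB n)) (wk n (F \<circ> sw))"
    using asym unfolding asymmetric_def lam_AB_rep lam_DA_rep F_def by blast
  have ltBA: "lex_less (wk n (F \<circ> rBA n)) (wk n (F \<circ> sw))"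
    using asym unfolding asymmetric_def lam_BA_rep lam_DA_rep F_def by blast
  have ltBC: "lex_less (wk n (F \<circ> rBC n)) (wk n (F \<circ> sw))"
    using asym unfolding asymmetric_def lam_BC_rep lam_DA_rep F_def by blast
  have ltCB: "lex_less (wk n (F \<circ> rCB n)) (wk n (F \<circ> sw))"
    using asym unfolding asymmetric_def lam_CB_rep lam_DA_rep F_def by blast
  have ltCD: "lex_less (wk n (F \<circ> rCD n)) (wk n (F \<circ> sw))"
    using asym unfolding asymmetric_def lam_CD_rep lam_DA_rep F_def by blast
  obtain p1 where p1g: "ingrid n p1" and Fp1: "F p1 \<noteq> 0"
    and dz1: "\<forall>x. ingrid n x \<longrightarrow> kless (sw x) (sw p1) \<longrightarrow> F x = 0"
    and alt: "p = p1 \<or> (F p1 = 1 \<and> ingrid n p \<and> F p \<noteq> 0 \<and> kless (sw p1) (sw p) \<and>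
       (\<forall>x. ingrid n x \<longrightarrow> kless (sw p1) (sw x) \<longrightarrow> kless (sw x) (sw p) \<longrightarrow> F x = 0))"
    using duo[OF assms(3)[folded f_def] r0g r0f] unfolding F_def by blast
  note nDC = nz_key[OF bij_DC ltDC p1g dz1]
  note nAD = nz_key[OF bij_AD ltAD p1g dz1]
  note nAB = nz_key[OF bij_AB ltAB p1g dz1]
  note nBA = nz_key[OF bij_BA ltBA p1g dz1]
  note nBC = nz_key[OF bij_BC ltBC p1g dz1]
  note nCB = nz_key[OF bij_CB ltCB p1g dz1]
  note nCD = nz_key[OF bij_CD ltCD p1g dz1]
  obtain i1 j1 where p1e: "p1 = (i1, j1)" by (cases p1)
  have j1g: "1 \<le> j1" "1 \<le> i1" "i1 \<le> n" using p1g p1e by (auto simp: ingrid_def)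
  have "\<exists>t. \<not> kless (1,t) (j1,i1)"
  proof -
    consider "a = 1" | "a = n" | "b = 1" | "b = n" using r0(3) by blast
    then show ?thesis
    proof cases
      case 1
      have "\<not> kless (id (a,b)) (sw p1)" using nDC(1) r0g Fr0 by metis
      then show ?thesis using 1 p1e by (auto simp: sw_def)
    next
      case 2
      have "\<not> kless (rAB n (a,b)) (sw p1)" using nAB(1) r0g Fr0 by metis
      then show ?thesis using 2 p1e by (auto simp: sw_def rAB_def)
    next
      case 3
      have "\<not> kless (sw (a,b)) (sw p1)" using dz1 r0g Fr0 by metis
      then show ?thesis using 3 p1e by (auto simp: sw_def)
    next
      case 4
      have "\<not> kless (rBC n (a,b)) (sw p1)" using nBC(1) r0g Fr0 by metis
      then show ?thesis using 4 p1e by (auto simp: sw_def rBC_def)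
    qed
  qed
  then have j1: "j1 = 1" using j1g by (auto simp: kless_def)
  obtain m where nm: "n = 2*m" using ev by (auto elim: evenE)
  have i1: "2 \<le> i1" "i1 < n"
  proof -
    have "f i1 1 \<noteq> 0" using Fp1 p1e j1 by (simp add: F_def Fp_def)
    then show "2 \<le> i1" "i1 < n" using corners j1g by (auto simp: le_less)
  qed
  have "\<not> kless (kAD n p1) (sw p1)" using nAD(1) p1g Fp1 by metis
  then have i1m: "i1 \<le> m" using p1e j1 nm i1 by (auto simp: kless_def kAD_def sw_def)
  have p1e': "p1 = (i1, 1)" using p1e j1 by simp
  have main: "lex_less (wk n (F' \<circ> rCD n)) (wk n (F' \<circ> sw)) \<and> lex_less (wk n (F' \<circ> rAD n)) (wk n (F' \<circ> sw)) \<and>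
    lex_less (wk n (F' \<circ> rCB n)) (wk n (F' \<circ> sw)) \<and> lex_less (wk n (F' \<circ> rAB n)) (wk n (F' \<circ> sw)) \<and>
    lex_less (wk n (F' \<circ> rBA n)) (wk n (F' \<circ> sw)) \<and> lex_less (wk n (F' \<circ> rBC n)) (wk n (F' \<circ> sw))"
  proof (cases "p = p1")
    case True
    have qe: "q = (i1-1, 1)" using True p1e' q_def by (simp add: alg2_target_def)
    have pq: "p \<noteq> q" using qe True p1e' i1 by simp
    note mf = move_facts[OF pq f_def f'_def, folded F_def F'_def]
    have gq: "ingrid n q" using qe i1 by (simp add: ingrid_def; arith?)
    have qp1: "kless (sw q) (sw p1)" using qe p1e' i1 by (simp add: kless_def sw_def; arith?)
    have "F q = 0" using dz1 gq qp1 by blast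
    then have Fq: "F q < F' q" using mf(3) by simp
    have mono: "\<forall>x. ingrid n x \<longrightarrow> x \<noteq> q \<longrightarrow> F' x \<le> F x" using mf(1) by blast
    have pre: "\<forall>x. ingrid n x \<longrightarrow> kless (sw x) (sw q) \<longrightarrow> F' x = F x"
    proof (intro allI impI)
      fix x assume x: "ingrid n x" "kless (sw x) (sw q)"
      have "x \<noteq> q" using x kless_irrefl by blast
      moreover have "x \<noteq> p" using x qp1 True kless_asym by blast
      ultimately show "F' x = F x" using mf(2) by blast
    qed
    note GA = geoA[OF nm i1(1) i1m, folded qe]
    show ?thesis
      using G_node[OF bij1_of[OF bij_CD] ltCD mono pre Fq gq] G_node[OF bij1_of[OF bij_AD] ltAD mono pre Fq gq]
        G_node[OF bij1_of[OF bij_CB] ltCB mono pre Fq gq] G_node[OF bij1_of[OF bij_AB] ltAB mono pre Fq gq]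
        G_node[OF bij1_of[OF bij_BA] ltBA mono pre Fq gq] G_node[OF bij1_of[OF bij_BC] ltBC mono pre Fq gq]
        GA by blast
  next
    case False
    then have Fp11: "F p1 = 1" and pg: "ingrid n p" and Fpn: "F p \<noteq> 0" and o1: "kless (sw p1) (sw p)"
      and btw: "\<forall>x. ingrid n x \<longrightarrow> kless (sw p1) (sw x) \<longrightarrow> kless (sw x) (sw p) \<longrightarrow> F x = 0"
      using alt by blast+
    obtain i2 j2 where pe: "p = (i2, j2)" by (cases p)
    have pb: "1 \<le> i2" "i2 \<le> n" "1 \<le> j2" "j2 \<le> n" using pg pe by (auto simp: ingrid_def)
    have nc: "\<not>((i2=1 \<or> i2=n) \<and> (j2=1 \<or> j2=n))"
      using Fpn pe corners by (auto simp: F_def Fp_def)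
    have cDA: "j2 = 1 \<longrightarrow> i1 < i2" using o1 pe p1e' by (auto simp: kless_def sw_def)
    have "\<not> kless (id p) (sw p1)" using nDC(1) pg Fpn by metis
    then have cDC: "i2 = 1 \<longrightarrow> i1 \<le> j2" using pe p1e' by (auto simp: kless_def sw_def)
    have "\<not> kless (kAD n p) (sw p1)" using nAD(1) pg Fpn by metis
    then have cAD: "j2 = 1 \<longrightarrow> i1 + i2 \<le> n+1" using pe p1e' pb by (auto simp: kless_def sw_def kAD_def)
    have "\<not> kless (rAB n p) (sw p1)" using nAB(1) pg Fpn by metis
    then have cAB: "i2 = n \<longrightarrow> i1 \<le> j2" using pe p1e' pb by (auto simp: kless_def sw_def rAB_def)
    have "\<not> kless (rBA n p) (sw p1)" using nBA(1) pg Fpn by metis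
    then have cBA: "i2 = n \<longrightarrow> i1 + j2 \<le> n+1" using pe p1e' pb by (auto simp: kless_def sw_def rBA_def)
    have "\<not> kless (rBC n p) (sw p1)" using nBC(1) pg Fpn by metis
    then have cBC: "j2 = n \<longrightarrow> i1 + i2 \<le> n+1" using pe p1e' pb by (auto simp: kless_def sw_def rBC_def)
    have "\<not> kless (kCB n p) (sw p1)" using nCB(1) pg Fpn by metis
    then have cCB: "j2 = n \<longrightarrow> i1 \<le> i2" using pe p1e' pb by (auto simp: kless_def sw_def kCB_def)
    have "\<not> kless (rCD n p) (sw p1)" using nCD(1) pg Fpn by metis
    then have cCD: "i2 = 1 \<longrightarrow> i1 + j2 \<le> n+1" using pe p1e' pb by (auto simp: kless_def sw_def rCD_def)
    have gl: "geoloc n m i1 i2 j2" unfolding geoloc_def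
      using nm i1(1) i1m pb nc cDA cDC cAD cAB cBA cBC cCB cCD by blast
    have qe: "q = alg2_target n (i2, j2)" using q_def pe by simp
    have qf: "ingrid n q" "kless (sw q) (sw p)" "q \<noteq> p" using geoloc.q_facts[OF gl] qe pe by auto
    note mf = move_facts[OF qf(3)[symmetric] f_def f'_def, folded F_def F'_def]
    have DAzero: "\<forall>x. ingrid n x \<longrightarrow> kless (sw x) (sw p) \<longrightarrow> x \<noteq> p1 \<longrightarrow> F x = 0"
    proof (intro allI impI)
      fix x assume x: "ingrid n x" "kless (sw x) (sw p)" "x \<noteq> p1"
      have "sw x \<noteq> sw p1" using x(3) by (metis sw_sw)
      then consider "kless (sw x) (sw p1)" | "kless (sw p1) (sw x)" using kless_total by blast
      then show "F x = 0"
      proof cases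
        case 1 then show ?thesis using dz1 x by blast
      next
        case 2 then show ?thesis using btw x by blast
      qed
    qed
    have "F q \<le> 1"
    proof (cases "q = p1")
      case True then show ?thesis using Fp11 by simp
    next
      case False then have "F q = 0" using DAzero qf by metis
      then show ?thesis by simp
    qed
    then have Fq: "F q < F' q" using mf(3) by simp
    have mono: "\<forall>x. ingrid n x \<longrightarrow> x \<noteq> q \<longrightarrow> F' x \<le> F x" using mf(1) by blast
    have same: "\<forall>x. ingrid n x \<longrightarrow> x \<noteq> p \<longrightarrow> x \<noteq> q \<longrightarrow> F' x = F x" using mf(2) by blast
    have p2f: "F p \<ge> 1" "p \<noteq> p1" "q \<noteq> p" "F p \<le> 1 \<longrightarrow> F' p = 0" using Fpn False qf mf(4) by auto
    have gd: "geo_disj (rCD n) (rCD n) p1 p q" "geo_disj (rAD n) (kAD n) p1 p q"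
      "geo_disj (rCB n) (kCB n) p1 p q" "geo_disj (rBA n) (rBA n) p1 p q" "geo_disj (rBC n) (rBC n) p1 p q"
      "geo_disj (rAB n) (rAB n) p1 p q \<or> (i2 = n \<and> j2 = m+1 \<and> i1 = m)"
      using geoloc.geo_CD[OF gl] geoloc.geo_AD[OF gl] geoloc.geo_CB[OF gl] geoloc.geo_BA[OF gl]
        geoloc.geo_BC[OF gl] geoloc.geo_AB[OF gl] p1e' pe qe by simp_all
    note CB = caseB_word[OF _ _ _ mono same Fq qf(1) p1g Fp11 pg p2f DAzero o1 qf(2)]
    have rCD: "lex_less (wk n (F' \<circ> rCD n)) (wk n (F' \<circ> sw))"
      by (rule CB[OF bij1_of[OF bij_CD] bij2_of[OF bij_CD] ltCD gd(1)[unfolded geo_disj_def]])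
    have rAD: "lex_less (wk n (F' \<circ> rAD n)) (wk n (F' \<circ> sw))"
      by (rule CB[OF bij1_of[OF bij_AD] bij2_of[OF bij_AD] ltAD gd(2)[unfolded geo_disj_def]])
    have rCB: "lex_less (wk n (F' \<circ> rCB n)) (wk n (F' \<circ> sw))"
      by (rule CB[OF bij1_of[OF bij_CB] bij2_of[OF bij_CB] ltCB gd(3)[unfolded geo_disj_def]])
    have rBA: "lex_less (wk n (F' \<circ> rBA n)) (wk n (F' \<circ> sw))"
      by (rule CB[OF bij1_of[OF bij_BA] bij2_of[OF bij_BA] ltBA gd(4)[unfolded geo_disj_def]])
    have rBC: "lex_less (wk n (F' \<circ> rBC n)) (wk n (F' \<circ> sw))"
      by (rule CB[OF bij1_of[OF bij_BC] bij2_of[OF bij_BC] ltBC gd(5)[unfolded geo_disj_def]])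
    have rAB: "lex_less (wk n (F' \<circ> rAB n)) (wk n (F' \<circ> sw))"
    proof (cases "geo_disj (rAB n) (rAB n) p1 p q")
      case True
      show ?thesis by (rule CB[OF bij1_of[OF bij_AB] bij2_of[OF bij_AB] ltAB True[unfolded geo_disj_def]])
    next
      case False
      then have sp: "i2 = n" "j2 = m+1" "i1 = m" using gd(6) by blast+
      have m2: "2 \<le> m" using i1 sp by simp
      have qe2: "q = (n, m)" using qe sp nm m2 by (simp add: alg2_target_def)
      show ?thesis
      proof (rule special_AB[OF nm m2 ltBA _ Fp11 _ p2f(1) qe2])
        show "p1 = (m,1)" using p1e' sp by simp
        show "p = (n, m+1)" using pe sp by simp
        show "\<forall>x. x \<noteq> q \<longrightarrow> F' x \<le> F x" by (rule mf(1))
        show "\<forall>x. x \<noteq> p \<longrightarrow> x \<noteq> q \<longrightarrow> F' x = F x" by (rule mf(2))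
        show "F q = 0 \<longrightarrow> F' q = 1" by (rule mf(5))
        show "F p \<le> 1 \<longrightarrow> F' p = 0" by (rule mf(4))
        show "\<forall>x. ingrid n x \<longrightarrow> kless (sw x) (sw p) \<longrightarrow> x \<noteq> p1 \<longrightarrow> F x = 0" by (rule DAzero)
        show "\<forall>x. ingrid n x \<longrightarrow> kless (rAB n x) (sw p1) \<longrightarrow> F x = 0" by (rule nAB(1))
        show "\<forall>x. ingrid n x \<longrightarrow> kless (rBA n x) (sw p1) \<longrightarrow> F x = 0" by (rule nBA(1))
      qed
    qed
    show ?thesis using rCD rAD rCB rAB rBA rBC by blast
  qed
  show ?thesis
    unfolding Let_def q_def[symmetric] f'_def[symmetric] lam_CD_rep lam_AD_rep lam_CB_rep lam_AB_rep
      lam_BA_rep lam_BC_rep lam_DA_rep F'_def[symmetric]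
    by (rule main)
qed

end
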